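(* Let $(X,\Sigma,\mu)$ be a complete $\sigma$-finite measure space, $\mathcal{A}\subseteq\Sigma$ a sub-$\sigma$-finite algebra, $E=E^{\mathcal{A}}$ the associated conditional expectation, and $u\in\mathcal{D}(E)$ such that $T=EM_u$ is a bounded operator on $L^2(\Sigma)$. For $\lambda\in\mathbb{C}$ let $A_\lambda=\{x\in X: E(u)(x)=\lambda\}$. Then: (a) $\sigma_p(EM_u)\setminus\{0\}=\{\lambda\in\mathbb{C}\setminus\{0\}:\mu(A_\lambda)>0\}$. (b) $\{\lambda\in\mathbb{C}:\mu(A_\lambda)>0\}\subseteq\sigma_p(EM_u)$. (c) If $\mu(\{x\in X: E(u)(x)=0\})>0$, then $\{\lambda\in\mathbb{C}:\mu(A_\lambda)>0\}=\sigma_p(EM_u)$.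
   Context: For a sub-$\sigma$-finite algebra $\mathcal{A}\subseteq\Sigma$, $E=E^{\mathcal{A}}$ denotes the conditional expectation: for $f\geq 0$ measurable or $f\in L^2(\Sigma)$, $Ef$ is the unique $\mathcal{A}$-measurable function with $\int_A f\,d\mu=\int_A Ef\,d\mu$ for all $A\in\mathcal{A}$. $\mathcal{D}(E)=\{g\in L^0(\Sigma): E(|g|)\in L^0(\mathcal{A})\}$, where $L^0$ denotes a.e. finite measurable functions. $EM_u f=E(uf)$. $\sigma_p(T)$ is the point spectrum: the set of $\lambda\in\mathbb{C}$ for which there is a unit vector $x$ with $(T-\lambda)x=0$. *)

theory Defs
  imports "HOL-Probability.Probability"
begin

text \<open>Conditional expectation of a complex-valued function, defined componentwise via the
library's real conditional expectation (which is itself defined through the positive and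
negative parts, i.e. through nn_cond_exp). For g in D(E) this is the usual extension of E.\<close>
definition cond_exp_c :: "'a measure \<Rightarrow> 'a measure \<Rightarrow> ('a \<Rightarrow> complex) \<Rightarrow> ('a \<Rightarrow> complex)" where
  "cond_exp_c M F g = (\<lambda>x. complex_of_real (real_cond_exp M F (\<lambda>y. Re (g y)) x)
                          + \<i> * complex_of_real (real_cond_exp M F (\<lambda>y. Im (g y)) x))"

definition domE :: "'a measure \<Rightarrow> 'a measure \<Rightarrow> ('a \<Rightarrow> complex) set" where
  "domE M F = {g. g \<in> borel_measurable M \<and>
      (AE x in M. nn_cond_exp M F (\<lambda>y. ennreal (cmod (g y))) x < \<infinity>)}"

text \<open>Square integrable complex functions (representatives of L^2(Sigma)).\<close>
definition L2c :: "'a measure \<Rightarrow> ('a \<Rightarrow> complex) set" where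
  "L2c M = {f. f \<in> borel_measurable M \<and> integrable M (\<lambda>x. (cmod (f x))\<^sup>2)}"

definition L2norm :: "'a measure \<Rightarrow> ('a \<Rightarrow> complex) \<Rightarrow> real" where
  "L2norm M f = sqrt (\<integral>x. (cmod (f x))\<^sup>2 \<partial>M)"

definition EMu_bounded :: "'a measure \<Rightarrow> 'a measure \<Rightarrow> ('a \<Rightarrow> complex) \<Rightarrow> bool" where
  "EMu_bounded M F u \<longleftrightarrow> (\<exists>C. \<forall>f \<in> L2c M.
      (\<lambda>x. u x * f x) \<in> domE M F \<and>
      cond_exp_c M F (\<lambda>x. u x * f x) \<in> L2c M \<and>
      L2norm M (cond_exp_c M F (\<lambda>x. u x * f x)) \<le> C * L2norm M f)"

text \<open>Point spectrum of EM_u on L^2(Sigma): eigenvalues with a unit eigenvector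
(equality of L^2 elements = equality almost everywhere).\<close>
definition point_spectrum_EMu :: "'a measure \<Rightarrow> 'a measure \<Rightarrow> ('a \<Rightarrow> complex) \<Rightarrow> complex set" where
  "point_spectrum_EMu M F u = {c. \<exists>f \<in> L2c M. L2norm M f = 1 \<and>
      (AE x in M. cond_exp_c M F (\<lambda>y. u y * f y) x = c * f x)}"

definition level_set_Eu :: "'a measure \<Rightarrow> 'a measure \<Rightarrow> ('a \<Rightarrow> complex) \<Rightarrow> complex \<Rightarrow> 'a set" where
  "level_set_Eu M F u c = {x \<in> space M. cond_exp_c M F u x = c}"

end

theory Submission
  imports Defs
begin


context sigma_finite_subalgebra begin

lemma F_exhaust:
  obtains S :: "nat \<Rightarrow> 'a set" where "range S \<subseteq> sets F" "(\<Union>i. S i) = space M"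
    "\<And>i. emeasure M (S i) \<noteq> \<infinity>" "incseq S"
proof -
  obtain S :: "nat \<Rightarrow> 'a set" where S: "range S \<subseteq> sets (restr_to_subalg M F)"
    "(\<Union>i. S i) = space (restr_to_subalg M F)"
    "\<And>i. emeasure (restr_to_subalg M F) (S i) \<noteq> \<infinity>" "incseq S"
    using sigma_finite_measure.sigma_finite_incseq[OF sigma_fin_subalg] by metis
  have "range S \<subseteq> sets F" using S(1) sets_restr_to_subalg[OF subalg] by simp
  moreover have "emeasure M (S i) \<noteq> \<infinity>" for i
    using S(3)[of i] emeasure_restr_to_subalg[OF subalg, of "S i"] \<open>range S \<subseteq> sets F\<close> by auto
  ultimately show ?thesis using that S space_restr_to_subalg by metis
qed

lemma rce_nonneg_mult:
  assumes [measurable]: "\<phi> \<in> borel_measurable F" "g \<in> borel_measurable M" and nn: "\<And>x. \<phi> x \<ge> 0"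
  shows "AE x in M. real_cond_exp M F (\<lambda>x. \<phi> x * g x) x = \<phi> x * real_cond_exp M F g x"
proof -
  have e1: "(\<lambda>x. ennreal (\<phi> x * g x)) = (\<lambda>x. ennreal (\<phi> x) * ennreal (g x))"
    using nn by (simp add: ennreal_mult')
  have e2: "(\<lambda>x. ennreal (- (\<phi> x * g x))) = (\<lambda>x. ennreal (\<phi> x) * ennreal (- g x))"
    using nn by (simp add: ennreal_mult'[symmetric])
  have a1: "AE x in M. ennreal (\<phi> x) * nn_cond_exp M F (\<lambda>x. ennreal (g x)) x = nn_cond_exp M F (\<lambda>x. ennreal (\<phi> x) * ennreal (g x)) x"
    by (rule nn_cond_exp_prod) auto
  have a2: "AE x in M. ennreal (\<phi> x) * nn_cond_exp M F (\<lambda>x. ennreal (- g x)) x = nn_cond_exp M F (\<lambda>x. ennreal (\<phi> x) * ennreal (- g x)) x"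
    by (rule nn_cond_exp_prod) auto
  show ?thesis using a1 a2
  proof eventually_elim
    case (elim x)
    show ?case unfolding real_cond_exp_def e1 e2 elim(1)[symmetric] elim(2)[symmetric]
      by (simp add: enn2real_mult nn right_diff_distrib)
  qed
qed

lemma cce_nonneg_mult:
  assumes [measurable]: "\<phi> \<in> borel_measurable F" "g \<in> borel_measurable M" and nn: "\<And>x. \<phi> x \<ge> 0"
  shows "AE x in M. cond_exp_c M F (\<lambda>x. complex_of_real (\<phi> x) * g x) x = complex_of_real (\<phi> x) * cond_exp_c M F g x"
proof -
  have "AE x in M. real_cond_exp M F (\<lambda>x. \<phi> x * Re (g x)) x = \<phi> x * real_cond_exp M F (\<lambda>x. Re (g x)) x"
    by (rule rce_nonneg_mult) (auto simp: nn)
  moreover have "AE x in M. real_cond_exp M F (\<lambda>x. \<phi> x * Im (g x)) x = \<phi> x * real_cond_exp M F (\<lambda>x. Im (g x)) x"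
    by (rule rce_nonneg_mult) (auto simp: nn)
  ultimately show ?thesis
    by eventually_elim (simp add: cond_exp_c_def algebra_simps)
qed

lemma int_local:
  assumes GF: "G \<in> sets F" and Gfin: "emeasure M G \<noteq> \<infinity>"
    and [measurable]: "g \<in> borel_measurable M" "r \<in> borel_measurable F"
    and C: "C \<ge> 0" "\<And>x. x \<in> G \<Longrightarrow> \<bar>r x\<bar> \<le> C"
    and D: "D \<ge> 0" "\<And>x. x \<in> G \<Longrightarrow> nn_cond_exp M F (\<lambda>x. ennreal \<bar>g x\<bar>) x \<le> ennreal D"
  shows "integrable M (\<lambda>x. (indicator G x * r x) * g x)"
proof -
  have GM[measurable]: "G \<in> sets M" using GF subalg by (meson subalgebra_def subsetD)
  have [measurable]: "G \<in> sets F" by fact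
  have [measurable]: "r \<in> borel_measurable M" by (rule measurable_from_subalg[OF subalg]) simp
  have "(\<integral>\<^sup>+x. ennreal (norm ((indicator G x * r x) * g x)) \<partial>M)
      \<le> (\<integral>\<^sup>+x. ennreal (C * indicator G x) * ennreal \<bar>g x\<bar> \<partial>M)"
  proof (rule nn_integral_mono)
    fix x
    have "norm ((indicator G x * r x) * g x) \<le> (C * indicator G x) * \<bar>g x\<bar>"
      using C by (cases "x \<in> G") (auto simp: abs_mult intro: mult_right_mono)
    then show "ennreal (norm ((indicator G x * r x) * g x)) \<le> ennreal (C * indicator G x) * ennreal \<bar>g x\<bar>"
      using C by (simp add: ennreal_mult'[symmetric] ennreal_leI)
  qed
  also have "\<dots> = (\<integral>\<^sup>+x. ennreal (C * indicator G x) * nn_cond_exp M F (\<lambda>x. ennreal \<bar>g x\<bar>) x \<partial>M)"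
    by (rule nn_cond_exp_intg[symmetric]) auto
  also have "\<dots> \<le> (\<integral>\<^sup>+x. ennreal (C * D) * indicator G x \<partial>M)"
  proof (rule nn_integral_mono)
    fix x
    show "ennreal (C * indicator G x) * nn_cond_exp M F (\<lambda>x. ennreal \<bar>g x\<bar>) x \<le> ennreal (C * D) * indicator G x"
    proof (cases "x \<in> G")
      case True
      then have "ennreal C * nn_cond_exp M F (\<lambda>x. ennreal \<bar>g x\<bar>) x \<le> ennreal C * ennreal D"
        using D by (intro mult_left_mono) auto
      then show ?thesis using True C by (simp add: ennreal_mult')
    qed simp
  qed
  also have "\<dots> = ennreal (C * D) * emeasure M G"
    by (simp add: nn_integral_cmult_indicator)
  also have "\<dots> < \<infinity>" using Gfin by (simp add: ennreal_mult_less_top less_top)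
  finally show ?thesis by (intro integrableI_bounded) auto
qed

lemma rce_bilin:
  assumes [measurable]: "g1 \<in> borel_measurable M" "g2 \<in> borel_measurable M"
    "p \<in> borel_measurable F" "q \<in> borel_measurable F"
    and fin1: "AE x in M. nn_cond_exp M F (\<lambda>x. ennreal \<bar>g1 x\<bar>) x < \<infinity>"
    and fin2: "AE x in M. nn_cond_exp M F (\<lambda>x. ennreal \<bar>g2 x\<bar>) x < \<infinity>"
  shows "AE x in M. real_cond_exp M F (\<lambda>x. p x * g1 x + q x * g2 x) x
           = p x * real_cond_exp M F g1 x + q x * real_cond_exp M F g2 x"
proof -
  obtain S :: "nat \<Rightarrow> 'a set" where S: "range S \<subseteq> sets F" "(\<Union>i. S i) = space M"
    "\<And>i. emeasure M (S i) \<noteq> \<infinity>" "incseq S" using F_exhaust by blast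
  define N1 where "N1 = nn_cond_exp M F (\<lambda>x. ennreal \<bar>g1 x\<bar>)"
  define N2 where "N2 = nn_cond_exp M F (\<lambda>x. ennreal \<bar>g2 x\<bar>)"
  have [measurable]: "N1 \<in> borel_measurable F" "N2 \<in> borel_measurable F"
    unfolding N1_def N2_def by auto
  have [measurable]: "p \<in> borel_measurable M" "q \<in> borel_measurable M"
    by (rule measurable_from_subalg[OF subalg], simp)+
  define G where "G n = S n \<inter> {x \<in> space F. N1 x \<le> of_nat n \<and> N2 x \<le> of_nat n \<and> \<bar>p x\<bar> \<le> real n \<and> \<bar>q x\<bar> \<le> real n}" for n
  have GF: "G n \<in> sets F" for n
  proof -
    have "S n \<in> sets F" using S(1) by auto
    moreover have "{x \<in> space F. N1 x \<le> of_nat n \<and> N2 x \<le> of_nat n \<and> \<bar>p x\<bar> \<le> real n \<and> \<bar>q x\<bar> \<le> real n} \<in> sets F"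
      by measurable
    ultimately show ?thesis unfolding G_def by auto
  qed
  have GM: "G n \<in> sets M" for n using GF subalg by (meson subalgebra_def subsetD)
  have Gfin: "emeasure M (G n) \<noteq> \<infinity>" for n
  proof -
    have "S n \<in> sets M" using S(1) subalg by (meson range_subsetD subalgebra_def subsetD)
    then have "emeasure M (G n) \<le> emeasure M (S n)" by (intro emeasure_mono) (auto simp: G_def)
    then show ?thesis using S(3)[of n] by (metis infinity_ennreal_def neq_top_trans)
  qed
  have loc: "AE x in M. x \<in> G n \<longrightarrow> real_cond_exp M F (\<lambda>x. p x * g1 x + q x * g2 x) x
           = p x * real_cond_exp M F g1 x + q x * real_cond_exp M F g2 x" for n
  proof -
    define chi where "chi = (indicator (G n) :: 'a \<Rightarrow> real)"
    have chimeas[measurable]: "chi \<in> borel_measurable F" unfolding chi_def using GF by measurable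
    have i1: "integrable M (\<lambda>x. (chi x * p x) * g1 x)"
      unfolding chi_def by (rule int_local[OF GF Gfin, where C="real n" and D="real n"])
        (auto simp: G_def N1_def ennreal_of_nat_eq_real_of_nat[symmetric])
    have i2: "integrable M (\<lambda>x. (chi x * q x) * g2 x)"
      unfolding chi_def by (rule int_local[OF GF Gfin, where C="real n" and D="real n"])
        (auto simp: G_def N2_def ennreal_of_nat_eq_real_of_nat[symmetric])
    have m1: "AE x in M. real_cond_exp M F (\<lambda>x. (chi x * p x) * g1 x) x = (chi x * p x) * real_cond_exp M F g1 x"
      by (rule real_cond_exp_mult) (auto simp: i1)
    have m2: "AE x in M. real_cond_exp M F (\<lambda>x. (chi x * q x) * g2 x) x = (chi x * q x) * real_cond_exp M F g2 x"
      by (rule real_cond_exp_mult) (auto simp: i2)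
    have ad: "AE x in M. real_cond_exp M F (\<lambda>x. (chi x * p x) * g1 x + (chi x * q x) * g2 x) x
        = real_cond_exp M F (\<lambda>x. (chi x * p x) * g1 x) x + real_cond_exp M F (\<lambda>x. (chi x * q x) * g2 x) x"
      by (rule real_cond_exp_add[OF i1 i2])
    have pl: "AE x in M. real_cond_exp M F (\<lambda>x. chi x * (p x * g1 x + q x * g2 x)) x
        = chi x * real_cond_exp M F (\<lambda>x. p x * g1 x + q x * g2 x) x"
      by (rule rce_nonneg_mult[OF chimeas]) (auto simp: chi_def)
    have eqf: "(\<lambda>x. chi x * (p x * g1 x + q x * g2 x)) = (\<lambda>x. (chi x * p x) * g1 x + (chi x * q x) * g2 x)"
      by (simp add: algebra_simps)
    show ?thesis using m1 m2 ad pl unfolding eqf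
    proof eventually_elim
      case (elim x)
      show ?case
      proof
        assume "x \<in> G n"
        then have "chi x = 1" by (simp add: chi_def)
        then show "real_cond_exp M F (\<lambda>x. p x * g1 x + q x * g2 x) x = p x * real_cond_exp M F g1 x + q x * real_cond_exp M F g2 x"
          using elim by simp
      qed
    qed
  qed
  have cov: "AE x in M. \<exists>n. x \<in> G n"
    using fin1 fin2 AE_space
  proof eventually_elim
    case (elim x)
    obtain n1 where n1: "x \<in> S n1" using elim(3) S(2) by auto
    obtain n2 where n2: "N1 x < of_nat n2" using elim(1) ennreal_Ex_less_of_nat N1_def by auto
    obtain n3 where n3: "N2 x < of_nat n3" using elim(2) ennreal_Ex_less_of_nat N2_def by auto
    obtain n4 where n4: "\<bar>p x\<bar> \<le> real n4" using real_arch_simple by blast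
    obtain n5 where n5: "\<bar>q x\<bar> \<le> real n5" using real_arch_simple by blast
    define n where "n = n1 + n2 + n3 + n4 + n5"
    have "x \<in> S n" using incseqD[OF S(4), of n1 n] n1 unfolding n_def by auto
    moreover have "N1 x \<le> of_nat n" 
      by (rule order_trans[OF less_imp_le[OF n2]]) (simp add: n_def)
    moreover have "N2 x \<le> of_nat n" 
      by (rule order_trans[OF less_imp_le[OF n3]]) (simp add: n_def)
    moreover have "\<bar>p x\<bar> \<le> real n" using n4 unfolding n_def by linarith
    moreover have "\<bar>q x\<bar> \<le> real n" using n5 unfolding n_def by linarith
    moreover have "x \<in> space F" using elim(3) subalg by (simp add: subalgebra_def)
    ultimately show ?case unfolding G_def by blast
  qed
  have "AE x in M. \<forall>n. x \<in> G n \<longrightarrow> real_cond_exp M F (\<lambda>x. p x * g1 x + q x * g2 x) x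
           = p x * real_cond_exp M F g1 x + q x * real_cond_exp M F g2 x"
    unfolding AE_all_countable using loc by blast
  then show ?thesis using cov by eventually_elim blast
qed

lemma cce_cong:
  assumes "AE x in M. g1 x = g2 x" and [measurable]: "g1 \<in> borel_measurable M" "g2 \<in> borel_measurable M"
  shows "AE x in M. cond_exp_c M F g1 x = cond_exp_c M F g2 x"
proof -
  have "AE x in M. real_cond_exp M F (\<lambda>x. Re (g1 x)) x = real_cond_exp M F (\<lambda>x. Re (g2 x)) x"
    by (rule real_cond_exp_cong) (use assms(1) in auto)
  moreover have "AE x in M. real_cond_exp M F (\<lambda>x. Im (g1 x)) x = real_cond_exp M F (\<lambda>x. Im (g2 x)) x"
    by (rule real_cond_exp_cong) (use assms(1) in auto)
  ultimately show ?thesis by eventually_elim (simp add: cond_exp_c_def)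
qed

lemma cce_pullout:
  assumes [measurable]: "u \<in> borel_measurable M" "h \<in> borel_measurable F"
    and fin: "AE x in M. nn_cond_exp M F (\<lambda>x. ennreal (cmod (u x))) x < \<infinity>"
  shows "AE x in M. cond_exp_c M F (\<lambda>x. u x * h x) x = h x * cond_exp_c M F u x"
proof -
  have finRe: "AE x in M. nn_cond_exp M F (\<lambda>x. ennreal \<bar>Re (u x)\<bar>) x < \<infinity>"
  proof -
    have "AE x in M. nn_cond_exp M F (\<lambda>x. ennreal \<bar>Re (u x)\<bar>) x \<le> nn_cond_exp M F (\<lambda>x. ennreal (cmod (u x))) x"
      by (rule nn_cond_exp_mono) (auto intro: ennreal_leI abs_Re_le_cmod)
    then show ?thesis using fin by eventually_elim (rule le_less_trans)
  qed
  have finIm: "AE x in M. nn_cond_exp M F (\<lambda>x. ennreal \<bar>Im (u x)\<bar>) x < \<infinity>"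
  proof -
    have "AE x in M. nn_cond_exp M F (\<lambda>x. ennreal \<bar>Im (u x)\<bar>) x \<le> nn_cond_exp M F (\<lambda>x. ennreal (cmod (u x))) x"
      by (rule nn_cond_exp_mono) (auto intro: ennreal_leI abs_Im_le_cmod)
    then show ?thesis using fin by eventually_elim (rule le_less_trans)
  qed
  have eR: "(\<lambda>x. Re (u x * h x)) = (\<lambda>x. Re (h x) * Re (u x) + - Im (h x) * Im (u x))"
    by (simp add: algebra_simps)
  have eI: "(\<lambda>x. Im (u x * h x)) = (\<lambda>x. Im (h x) * Re (u x) + Re (h x) * Im (u x))"
    by (simp add: algebra_simps)
  have R: "AE x in M. real_cond_exp M F (\<lambda>x. Re (h x) * Re (u x) + - Im (h x) * Im (u x)) x
     = Re (h x) * real_cond_exp M F (\<lambda>x. Re (u x)) x + - Im (h x) * real_cond_exp M F (\<lambda>x. Im (u x)) x"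
    by (rule rce_bilin[OF _ _ _ _ finRe finIm]) auto
  have I: "AE x in M. real_cond_exp M F (\<lambda>x. Im (h x) * Re (u x) + Re (h x) * Im (u x)) x
     = Im (h x) * real_cond_exp M F (\<lambda>x. Re (u x)) x + Re (h x) * real_cond_exp M F (\<lambda>x. Im (u x)) x"
    by (rule rce_bilin[OF _ _ _ _ finRe finIm]) auto
  show ?thesis using R I
    by eventually_elim (simp add: cond_exp_c_def eR eI complex_eq_iff algebra_simps)
qed

end

lemma cce_meas [measurable]: "cond_exp_c M F g \<in> borel_measurable F"
  unfolding cond_exp_c_def by measurable




lemma partB:
  assumes sf: "sigma_finite_subalgebra M F" and um: "u \<in> borel_measurable M"
    and pos: "emeasure M (level_set_Eu M F u c) > 0"
  shows "c \<in> point_spectrum_EMu M F u"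
proof -
  interpret sigma_finite_subalgebra M F by (rule sf)
  define A where "A = level_set_Eu M F u c"
  have AF: "A \<in> sets F"
  proof -
    have "A = {x \<in> space F. cond_exp_c M F u x = c}"
      using subalg by (simp add: A_def level_set_Eu_def subalgebra_def)
    also have "\<dots> \<in> sets F" by measurable
    finally show ?thesis .
  qed
  obtain S :: "nat \<Rightarrow> 'a set" where S: "range S \<subseteq> sets F" "(\<Union>i. S i) = space M"
    "\<And>i. emeasure M (S i) \<noteq> \<infinity>" "incseq S" using F_exhaust by blast
  have SM: "S i \<in> sets M" for i using S(1) subalg by (meson range_subsetD subalgebra_def subsetD)
  have AM: "A \<in> sets M" using AF subalg by (meson subalgebra_def subsetD)
  have "\<exists>i. emeasure M (A \<inter> S i) \<noteq> 0"
  proof (rule ccontr)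
    assume "\<not> ?thesis"
    then have "A \<inter> S i \<in> null_sets M" for i using AM SM by auto
    then have "(\<Union>i. A \<inter> S i) \<in> null_sets M" by blast
    moreover have "(\<Union>i. A \<inter> S i) = A" using S(2) AM sets.sets_into_space by auto
    ultimately show False using pos A_def by auto
  qed
  then obtain i where i: "emeasure M (A \<inter> S i) \<noteq> 0" by blast
  define B where "B = A \<inter> S i"
  have BF: "B \<in> sets F" using AF S(1) by (auto simp: B_def)
  have BM[measurable]: "B \<in> sets M" using AM SM by (simp add: B_def)
  have Bfin: "emeasure M B \<noteq> \<infinity>"
    using S(3)[of i] emeasure_mono[of B "S i" M] SM by (auto simp: B_def top_unique)
  define m where "m = measure M B"
  have eB: "emeasure M B = ennreal m" using Bfin by (simp add: m_def emeasure_eq_ennreal_measure)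
  have mpos: "m > 0" using i eB B_def by (metis ennreal_0 less_eq_real_def measure_nonneg m_def)
  define k where "k = 1 / sqrt m"
  define \<phi> where "\<phi> x = k * indicator B x" for x
  define f where "f x = complex_of_real (\<phi> x)" for x
  have phiF[measurable]: "\<phi> \<in> borel_measurable F" unfolding \<phi>_def using BF by measurable
  have phinn: "\<phi> x \<ge> 0" for x using mpos by (simp add: \<phi>_def k_def)
  have sq: "(\<lambda>x. (cmod (f x))\<^sup>2) = (\<lambda>x. k\<^sup>2 * indicator B x)"
    by (auto simp: f_def \<phi>_def power_mult_distrib indicator_def abs_mult)
  have intB: "integrable M (\<lambda>x. k\<^sup>2 * indicat_real B x)"
    using Bfin by (intro integrable_mult_right) (auto simp: less_top)
  have fL2: "f \<in> L2c M"
  proof -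
    have "\<phi> \<in> borel_measurable M" by (rule measurable_from_subalg[OF subalg phiF])
    then have "f \<in> borel_measurable M" unfolding f_def by measurable
    then show ?thesis unfolding L2c_def using intB sq by simp
  qed
  have "(\<integral>x. (cmod (f x))\<^sup>2 \<partial>M) = k\<^sup>2 * m"
    unfolding sq using Bfin by (simp add: m_def)
  also have "\<dots> = 1" using mpos by (simp add: k_def power_divide)
  finally have n1: "L2norm M f = 1" by (simp add: L2norm_def)
  have "AE x in M. cond_exp_c M F (\<lambda>x. complex_of_real (\<phi> x) * u x) x = complex_of_real (\<phi> x) * cond_exp_c M F u x"
    by (rule cce_nonneg_mult[OF phiF um phinn])
  then have "AE x in M. cond_exp_c M F (\<lambda>y. u y * f y) x = c * f x"
  proof eventually_elim
    case (elim x)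
    have e: "(\<lambda>y. u y * f y) = (\<lambda>x. complex_of_real (\<phi> x) * u x)" by (simp add: f_def mult.commute)
    have ee: "cond_exp_c M F (\<lambda>y. u y * f y) x = complex_of_real (\<phi> x) * cond_exp_c M F u x"
      using elim by (subst e) simp
    show ?case
    proof (cases "x \<in> B")
      case True
      then have "cond_exp_c M F u x = c" by (simp add: B_def A_def level_set_Eu_def)
      then show ?thesis unfolding ee by (simp add: f_def)
    next
      case False
      then show ?thesis unfolding ee by (simp add: \<phi>_def f_def)
    qed
  qed
  then show ?thesis unfolding point_spectrum_EMu_def using fL2 n1 by blast
qed

lemma partA:
  assumes sf: "sigma_finite_subalgebra M F" and um: "u \<in> borel_measurable M"
    and fin: "AE x in M. nn_cond_exp M F (\<lambda>x. ennreal (cmod (u x))) x < \<infinity>"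
    and c: "c \<noteq> 0" and sp: "c \<in> point_spectrum_EMu M F u"
  shows "emeasure M (level_set_Eu M F u c) > 0"
proof -
  interpret sigma_finite_subalgebra M F by (rule sf)
  obtain f where fL2: "f \<in> L2c M" and n1: "L2norm M f = 1"
    and eig: "AE x in M. cond_exp_c M F (\<lambda>y. u y * f y) x = c * f x"
    using sp unfolding point_spectrum_EMu_def by blast
  have fm[measurable]: "f \<in> borel_measurable M" using fL2 by (simp add: L2c_def)
  define h where "h x = cond_exp_c M F (\<lambda>y. u y * f y) x / c" for x
  have hF[measurable]: "h \<in> borel_measurable F" unfolding h_def by measurable
  have hM[measurable]: "h \<in> borel_measurable M" by (rule measurable_from_subalg[OF subalg hF])
  have fh: "AE x in M. f x = h x" using eig by eventually_elim (simp add: h_def c)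
  have cg: "AE x in M. cond_exp_c M F (\<lambda>y. u y * f y) x = cond_exp_c M F (\<lambda>y. u y * h y) x"
    by (rule cce_cong) (use fh um in auto)
  have po: "AE x in M. cond_exp_c M F (\<lambda>y. u y * h y) x = h x * cond_exp_c M F u x"
    by (rule cce_pullout[OF um hF fin])
  define A where "A = level_set_Eu M F u c"
  have AM: "A \<in> sets M"
  proof -
    have "A = {x \<in> space M. cond_exp_c M F u x = c}" by (simp add: A_def level_set_Eu_def)
    also have "\<dots> \<in> sets M" using measurable_from_subalg[OF subalg cce_meas] by measurable
    finally show ?thesis .
  qed
  show ?thesis
  proof (rule ccontr)
    assume "\<not> ?thesis"
    then have "emeasure M A = 0" by (simp add: A_def)
    then have "A \<in> null_sets M" using AM by auto
    then have nA: "AE x in M. x \<notin> A" by (rule AE_not_in)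
    have f0: "AE x in M. f x = 0" using nA cg po fh AE_space
    proof eventually_elim
      case (elim x)
      have "c * h x = h x * cond_exp_c M F u x"
        using elim(2,3) by (simp add: h_def c)
      moreover have "cond_exp_c M F u x \<noteq> c" using elim(1,5) by (simp add: A_def level_set_Eu_def)
      ultimately have "h x = 0"
        by (metis mult.commute mult_cancel_left)
      then show ?case using elim(4) by simp
    qed
    have "(\<integral>x. (cmod (f x))\<^sup>2 \<partial>M) = (\<integral>x. 0 \<partial>M)"
      by (rule integral_cong_AE) (use f0 in auto)
    then have "L2norm M f = 0" by (simp add: L2norm_def)
    then show False using n1 by simp
  qed
qed




theorem theorem3p1:
  fixes M F :: "'a measure" and u :: "'a \<Rightarrow> complex"
  assumes "complete_measure M"
    and "sigma_finite_measure M"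
    and "sigma_finite_subalgebra M F"
    and "u \<in> domE M F"
    and "EMu_bounded M F u"
  shows "(point_spectrum_EMu M F u - {0} =
           {c. c \<noteq> 0 \<and> emeasure M (level_set_Eu M F u c) > 0})
       \<and> ({c. emeasure M (level_set_Eu M F u c) > 0} \<subseteq> point_spectrum_EMu M F u)
       \<and> (emeasure M (level_set_Eu M F u 0) > 0 \<longrightarrow>
           {c. emeasure M (level_set_Eu M F u c) > 0} = point_spectrum_EMu M F u)"
proof -
  have um: "u \<in> borel_measurable M" and fin: "AE x in M. nn_cond_exp M F (\<lambda>x. ennreal (cmod (u x))) x < \<infinity>"
    using assms(4) by (auto simp: domE_def)
  have B: "\<And>c. emeasure M (level_set_Eu M F u c) > 0 \<Longrightarrow> c \<in> point_spectrum_EMu M F u"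
    by (rule partB[OF assms(3) um])
  have A: "\<And>c. c \<noteq> 0 \<Longrightarrow> c \<in> point_spectrum_EMu M F u \<Longrightarrow> emeasure M (level_set_Eu M F u c) > 0"
    by (rule partA[OF assms(3) um fin])
  have 1: "point_spectrum_EMu M F u - {0} = {c. c \<noteq> 0 \<and> emeasure M (level_set_Eu M F u c) > 0}"
  proof (intro equalityI subsetI)
    fix c assume "c \<in> point_spectrum_EMu M F u - {0}"
    then show "c \<in> {c. c \<noteq> 0 \<and> emeasure M (level_set_Eu M F u c) > 0}" using A by simp
  next
    fix c assume "c \<in> {c. c \<noteq> 0 \<and> emeasure M (level_set_Eu M F u c) > 0}"
    then show "c \<in> point_spectrum_EMu M F u - {0}" using B by simp
  qed
  have 2: "{c. emeasure M (level_set_Eu M F u c) > 0} \<subseteq> point_spectrum_EMu M F u"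
    using B by auto
  have 3: "{c. emeasure M (level_set_Eu M F u c) > 0} = point_spectrum_EMu M F u"
    if z: "emeasure M (level_set_Eu M F u 0) > 0"
  proof (intro equalityI 2 subsetI)
    fix c assume c: "c \<in> point_spectrum_EMu M F u"
    show "c \<in> {c. emeasure M (level_set_Eu M F u c) > 0}"
    proof (cases "c = 0")
      case True then show ?thesis using z by simp
    next
      case False then show ?thesis using A c by simp
    qed
  qed
  show ?thesis using 1 2 3 by blast
qed

end
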